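(* Let $n,k,n',k'$ be integers with $k<n<2k-1$, $n/k=n'/k'$, and $k,k'$ both even. Then there is a homomorphism $H_{n,k}\to H_{n',k'}$ if and only if $n'$ and $k'$ are integer multiples of $n$ and $k$, respectively. Moreover, any homomorphism $H_{n,k}\to H_{n',k'}$ is an isomorphism from $H_{n,k}$ to an induced subgraph of $H_{n',k'}$.
   Context: For integers $m\ge j$ with $j$ even, $H_{m,j}$ is the graph whose vertices are the even-weight elements of $\mathbb{Z}_2^m$, with $x\sim y$ iff $x$ and $y$ differ in exactly $j$ coordinates. A homomorphism is an adjacency-preserving map between vertex sets. *)

theory Defs
  imports Complex_Main "HOL-Library.FuncSet"
begin

text \<open>Elements of Z_2^m are identified with subsets of {0..<m} (their supports).
  The Hamming weight is the cardinality, and two vectors differ in exactly the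
  coordinates of the symmetric difference of their supports.\<close>

definition H_verts :: "nat \<Rightarrow> nat set set" where
  "H_verts m = {S. S \<subseteq> {..<m} \<and> even (card S)}"

definition H_adj :: "nat \<Rightarrow> nat set \<Rightarrow> nat set \<Rightarrow> bool" where
  "H_adj j S T \<longleftrightarrow> card ((S - T) \<union> (T - S)) = j"

definition H_hom :: "nat \<Rightarrow> nat \<Rightarrow> nat \<Rightarrow> nat \<Rightarrow> (nat set \<Rightarrow> nat set) \<Rightarrow> bool" where
  "H_hom m j m' j' f \<longleftrightarrow>
     f \<in> H_verts m \<rightarrow> H_verts m' \<and>
     (\<forall>S\<in>H_verts m. \<forall>T\<in>H_verts m. H_adj j S T \<longrightarrow> H_adj j' (f S) (f T))"

definition H_induced_embedding :: "nat \<Rightarrow> nat \<Rightarrow> nat \<Rightarrow> nat \<Rightarrow> (nat set \<Rightarrow> nat set) \<Rightarrow> bool" where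
  "H_induced_embedding m j m' j' f \<longleftrightarrow>
     f \<in> H_verts m \<rightarrow> H_verts m' \<and> inj_on f (H_verts m) \<and>
     (\<forall>S\<in>H_verts m. \<forall>T\<in>H_verts m. H_adj j' (f S) (f T) \<longleftrightarrow> H_adj j S T)"

end

theory Submission
  imports Defs "HOL-Computational_Algebra.Polynomial"
begin

definition Tc :: "nat \<Rightarrow> nat \<Rightarrow> nat \<Rightarrow> int" where
  "Tc d m w = coeff ([:1,-1:]^d * [:1,0,-1:]^m) w"

lemma coeff_mult_lin: "coeff (p * [:1,-1:]) w = coeff p w - (if 1 \<le> w then coeff p (w-1) else (0::int))"
proof -
  have "p * [:1,-1:] = p - monom 1 1 * p" by (simp add: monom_altdef algebra_simps)
  then show ?thesis by (simp add: coeff_monom_mult)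
qed

lemma coeff_mult_quad: "coeff (p * [:1,0,-1:]) w = coeff p w - (if 2 \<le> w then coeff p (w-2) else (0::int))"
proof -
  have "p * [:1,0,-1:] = p - monom 1 2 * p" by (simp add: monom_altdef algebra_simps power2_eq_square)
  then show ?thesis by (simp add: coeff_monom_mult)
qed

lemma coeff_lin_pow: "coeff ([:1,-1:]^d) w = (-1)^w * int (d choose w)"
proof (induction d arbitrary: w)
  case 0 then show ?case by (cases w) auto
next
  case (Suc d)
  have "[:1,-1:]^Suc d = [:1,-1:]^d * [:(1::int),-1:]" by (simp add: mult.commute)
  then have "coeff ([:1,-1:]^Suc d) w = coeff ([:1,-1:]^d) w - (if 1 \<le> w then coeff ([:1,-1:]^d) (w-1) else (0::int))"
    using coeff_mult_lin by metis
  then show ?case using Suc by (cases w) (auto simp: algebra_simps)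
qed

lemma T0: "Tc d 0 w = (-1)^w * int (d choose w)"
  by (simp add: Tc_def coeff_lin_pow)

lemma TSuc: "Tc d (Suc m) w = Tc d m w - (if 2 \<le> w then Tc d m (w-2) else 0)"
proof -
  have "[:1,-1:]^d * [:1,0,-1:]^Suc m = ([:1,-1:]^d * [:1,0,-1:]^m) * [:(1::int),0,-1:]"
    by (simp add: algebra_simps)
  then show ?thesis unfolding Tc_def by (metis coeff_mult_quad)
qed

definition beta :: "nat \<Rightarrow> nat \<Rightarrow> nat \<Rightarrow> real" where
  "beta d m w = (if w = 0 \<or> w = d+2*m then 1 else if w < d+2*m then real d * real ((d+2*m) choose w) / real (d+2*m) else 0)"

lemma binom_ratio: "real (Suc k) * real (n choose Suc k) = real (n - k) * real (n choose k)"
proof -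
  have "Suc k * (n choose Suc k) = (n - k) * (n choose k)"
    using binomial_absorption[of k n] binomial_absorb_comp[of n k] by simp
  then show ?thesis by (metis of_nat_mult)
qed

lemma binom_step: assumes "j + 2 \<le> n"
  shows "real (n choose (j+2)) + real (n choose j) < real n * real (n choose (j+1))"
proof -
  define a where "a = real (n choose (j+2))"
  define b where "b = real (n choose (j+1))"
  define c where "c = real (n choose j)"
  have 1: "real (j+2) * a = real (n - (j+1)) * b"
    using binom_ratio[of "j+1" n] by (simp add: a_def b_def)
  have 2: "real (j+1) * b = real (n - j) * c"
    using binom_ratio[of j n] by (simp add: b_def c_def)
  have bpos: "b > 0" using assms by (simp add: b_def)
  have a0: "a \<ge> 0" "c \<ge> 0" by (auto simp: a_def c_def)
  have "2 * a \<le> real (j+2) * a" using a0 by (intro mult_right_mono) auto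
  hence A: "2 * a \<le> real (n - (j+1)) * b" using 1 by simp
  have "2 * c \<le> real (n - j) * c" using a0 assms by (intro mult_right_mono) auto
  hence C: "2 * c \<le> real (j+1) * b" using 2 by simp
  have "real (n - (j+1)) + real (j+1) = real n" using assms by simp
  hence "2 * (a + c) \<le> real n * b" using A C by (simp add: algebra_simps)
  moreover have "real n * b > 0" using bpos assms by simp
  ultimately show ?thesis by (simp add: a_def b_def c_def)
qed

lemma binom_pascal2: "real ((n+2) choose (j+2)) = real (n choose (j+2)) + 2 * real (n choose (j+1)) + real (n choose j)"
proof -
  have "(n+2) choose (j+2) = Suc (Suc n) choose Suc (Suc j)" by simp
  also have "\<dots> = (n choose j) + (n choose Suc j) + ((n choose Suc j) + (n choose Suc (Suc j)))"
    by simp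
  finally show ?thesis by simp
qed

lemma choose2_real: "real (n choose 2) = real n * (real n - 1) / 2"
proof (cases n)
  case 0 then show ?thesis by simp
next
  case (Suc m)
  have "2 * (n choose 2) = n * ((n - 1) choose 1)" using times_binomial_minus1_eq[of 2 n] by simp
  hence "2 * real (n choose 2) = real n * real m" using Suc by (metis choose_one diff_Suc_1 of_nat_mult of_nat_numeral)
  then show ?thesis using Suc by simp
qed

lemma T_bound:
  assumes d2: "2 \<le> d"
  shows "\<bar>real_of_int (Tc d m w)\<bar> \<le> beta d m w \<and>
    (1 \<le> m \<longrightarrow> 2 \<le> w \<longrightarrow> w + 2 \<le> d + 2*m \<longrightarrow>
      \<bar>real_of_int (Tc d m w)\<bar> < real d * real ((d+2*m) choose w) / real (d+2*m))"
proof (induction m arbitrary: w)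
  case 0
  have "\<bar>real_of_int (Tc d 0 w)\<bar> = real (d choose w)" by (simp add: T0 abs_mult power_abs)
  moreover have "beta d 0 w = real (d choose w)"
    using d2 by (auto simp: beta_def binomial_eq_0)
  ultimately show ?case by simp
next
  case (Suc m)
  define n where "n = d + 2*m"
  have n2: "n \<ge> 2" using d2 by (simp add: n_def)
  have NN: "d + 2 * Suc m = n + 2" by (simp add: n_def)
  have IH: "\<And>w. \<bar>real_of_int (Tc d m w)\<bar> \<le> beta d m w" using Suc by blast
  have bm: "beta d m w = (if w = 0 \<or> w = n then 1 else if w < n then real d * real (n choose w) / real n else 0)" for w
    unfolding beta_def n_def by (rule refl)
  have bS: "beta d (Suc m) w = (if w = 0 \<or> w = n+2 then 1 else if w < n+2 then real d * real ((n+2) choose w) / real (n+2) else 0)" for w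
    unfolding beta_def NN by (rule refl)
  have dpos: "real d > 0" using d2 by simp
  have main: "\<bar>real_of_int (Tc d (Suc m) (j+2))\<bar> < real d * real ((n+2) choose (j+2)) / real (n+2)" if jn: "j + 2 \<le> n" for j
  proof -
    have eq: "Tc d (Suc m) (j+2) = Tc d m (j+2) - Tc d m j" by (simp add: TSuc)
    have tri: "\<bar>real_of_int (Tc d (Suc m) (j+2))\<bar> \<le> beta d m (j+2) + beta d m j"
      using IH[of "j+2"] IH[of j] eq by simp
    have pas: "real ((n+2) choose (j+2)) = real (n choose (j+2)) + 2 * real (n choose (j+1)) + real (n choose j)"
      by (rule binom_pascal2)
    have st: "real (n choose (j+2)) + real (n choose j) < real n * real (n choose (j+1))"
      using binom_step[OF jn] .
    show ?thesis
    proof (cases "j = 0")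
      case True
      show ?thesis
      proof (cases "n = 2")
        case True
        with \<open>j=0\<close> have "beta d m (j+2) + beta d m j = 2" by (simp add: bm)
        moreover have "real d * real ((n+2) choose (j+2)) / real (n+2) = real d * 6 / 4"
          using True \<open>j=0\<close> by (simp add: numeral_eq_Suc)
        ultimately have "beta d m (j+2) + beta d m j < real d * real ((n+2) choose (j+2)) / real (n+2)"
          using d2 by linarith
        then show ?thesis using tri by linarith
      next
        case False
        with \<open>j=0\<close> n2 have "beta d m (j+2) + beta d m j = real d * real (n choose 2) / real n + 1"
          apply (simp add: bm) by (metis numeral_2_eq_2)
        also have "\<dots> = real d * (real n - 1) / 2 + 1" using n2 by (simp add: choose2_real)
        also have "\<dots> < real d * (real n + 1) / 2"
        proof -
          have "real d * (real n + 1) / 2 = real d * (real n - 1) / 2 + real d" by (simp add: field_simps)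
          then show ?thesis using d2 by linarith
        qed
        also have "\<dots> = real d * real ((n+2) choose (j+2)) / real (n+2)"
        proof -
          have e: "real ((n+2) choose (j+2)) = real (n+2) * (real (n+2) - 1)/2"
          proof -
            have c: "(n+2) choose (j+2) = (n+2) choose 2" using \<open>j=0\<close> by (metis add_0)
            show ?thesis unfolding c by (rule choose2_real)
          qed
          show ?thesis unfolding e by (simp add: field_simps)
        qed
        finally show ?thesis using tri by linarith
      qed
    next
      case False
      show ?thesis
      proof (cases "j + 2 = n")
        case True
        have jj: "j = n - 2" using True by simp
        have c1: "n choose j = n choose 2" unfolding jj using n2 binomial_symmetric[of 2 n] by metis
        have c2: "(n+2) choose (j+2) = (n+2) choose 2" unfolding True
          using binomial_symmetric[of 2 "n+2"] by (metis add_diff_cancel_right' le_add2)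
        from True False have "beta d m (j+2) + beta d m j = 1 + real d * real (n choose 2) / real n"
          by (simp add: bm c1)
        also have "\<dots> = real d * (real n - 1) / 2 + 1" using n2 by (simp add: choose2_real)
        also have "\<dots> < real d * (real n + 1) / 2"
        proof -
          have "real d * (real n + 1) / 2 = real d * (real n - 1) / 2 + real d" by (simp add: field_simps)
          then show ?thesis using d2 by linarith
        qed
        also have "\<dots> = real d * real ((n+2) choose (j+2)) / real (n+2)"
        proof -
          have e: "real ((n+2) choose (j+2)) = real (n+2) * (real (n+2) - 1)/2"
            unfolding c2 by (rule choose2_real)
          show ?thesis unfolding e by (simp add: field_simps)
        qed
        finally show ?thesis using tri by linarith
      next
        case False
        with \<open>j \<noteq> 0\<close> jn have "beta d m (j+2) + beta d m j = real d * (real (n choose (j+2)) + real (n choose j)) / real n"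
          by (simp add: bm add_divide_distrib distrib_left)
        also have "\<dots> < real d * real ((n+2) choose (j+2)) / real (n+2)"
        proof -
          define a where "a = real (n choose (j+2)) + real (n choose j)"
          define b where "b = real (n choose (j+1))"
          define X where "X = real ((n+2) choose (j+2))"
          have X: "X = a + 2 * b" using pas by (simp add: a_def b_def X_def)
          have st': "a < real n * b" using st by (simp add: a_def b_def)
          have "(real n + 2) * a = real n * a + 2 * a" by (simp add: algebra_simps)
          also have "\<dots> < real n * a + 2 * (real n * b)" using st' by simp
          also have "\<dots> = real n * X" by (simp add: X algebra_simps)
          finally have lt: "(real n + 2) * a < real n * X" .
          have npos: "real n > 0" using n2 by simp
          have "a / real n < X / (real n + 2)"
            using lt npos by (simp add: divide_simps mult.commute)
          hence "real d * (a / real n) < real d * (X / (real n + 2))"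
            using dpos by (rule mult_strict_left_mono)
          then show ?thesis by (simp add: a_def X_def add.commute)
        qed
        finally show ?thesis using tri by linarith
      qed
    qed
  qed
  show ?case
  proof (intro conjI impI)
    show "\<bar>real_of_int (Tc d (Suc m) w)\<bar> \<le> beta d (Suc m) w"
    proof -
      consider "w = 0" | "w = 1" | j where "w = j + 2" "j + 2 \<le> n" | "w = n + 1" | "w = n + 2" | "w > n + 2"
      proof -
        have "w = 0 \<or> w = 1 \<or> (w = (w - 2) + 2 \<and> (w - 2) + 2 \<le> n) \<or> w = n + 1 \<or> w = n + 2 \<or> w > n + 2" by arith
        then show thesis using that by blast
      qed
      then show ?thesis
      proof cases
        case 1
        have "Tc d (Suc m) w = Tc d m 0" using 1 by (simp add: TSuc)
        moreover have "beta d m 0 = 1" "beta d (Suc m) w = 1" using 1 unfolding bm bS by auto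
        ultimately show ?thesis using IH[of 0] by simp
      next
        case 2
        have "Tc d (Suc m) w = Tc d m 1" using 2 by (simp add: TSuc)
        moreover have "beta d m 1 = real d" using n2 unfolding bm by auto
        moreover have "beta d (Suc m) w = real d" using 2 unfolding bS by auto
        ultimately show ?thesis using IH[of 1] by simp
      next
        case (3 j)
        have "beta d (Suc m) w = real d * real ((n+2) choose (j+2)) / real (n+2)" using 3 unfolding bS by auto
        then show ?thesis using main[OF 3(2)] 3 by simp
      next
        case 4
        have "Tc d (Suc m) w = Tc d m (n+1) - Tc d m (n - 1)" using 4 n2 by (simp add: TSuc)
        moreover have "beta d m (n+1) = 0" unfolding bm by auto
        moreover have "beta d m (n-1) = real d"
        proof -
          have "n choose (n-1) = n" using n2 by (metis One_nat_def Suc_diff_le binomial_Suc_n diff_Suc_1 le_trans one_le_numeral)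
          then show ?thesis using n2 unfolding bm by auto
        qed
        moreover have "beta d (Suc m) w = real d"
        proof -
          have "(n+2) choose w = n+2" using 4 by (metis add_2_eq_Suc' binomial_Suc_n plus_1_eq_Suc add.commute)
          then show ?thesis using 4 unfolding bS by auto
        qed
        ultimately show ?thesis using IH[of "n+1"] IH[of "n-1"] by simp
      next
        case 5
        have "Tc d (Suc m) w = Tc d m (n+2) - Tc d m n" using 5 by (simp add: TSuc)
        moreover have "beta d m (n+2) = 0" unfolding bm by auto
        moreover have "beta d m n = 1" unfolding bm by auto
        moreover have "beta d (Suc m) w = 1" using 5 unfolding bS by auto
        ultimately show ?thesis using IH[of "n+2"] IH[of "n"] by simp
      next
        case 6
        have "Tc d (Suc m) w = Tc d m w - Tc d m (w-2)" using 6 by (simp add: TSuc)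
        moreover have "beta d m w = 0" "beta d m (w-2) = 0" using 6 unfolding bm by auto
        moreover have "beta d (Suc m) w = 0" using 6 unfolding bS by auto
        ultimately show ?thesis using IH[of "w"] IH[of "w-2"] by simp
      qed
    qed
  next
    assume "2 \<le> w" "w + 2 \<le> d + 2 * Suc m"
    then obtain j where "w = j + 2" "j + 2 \<le> n" by (metis NN add.commute add_le_cancel_left le_add_diff_inverse2)
    then show "\<bar>real_of_int (Tc d (Suc m) w)\<bar> < real d * real ((d + 2 * Suc m) choose w) / real (d + 2 * Suc m)"
      using main NN by simp
  qed
qed



definition chi :: "nat set \<Rightarrow> nat set \<Rightarrow> real" where
  "chi a x = (-1) ^ card (a \<inter> x)"

definition Kset :: "nat \<Rightarrow> nat \<Rightarrow> nat set set" where
  "Kset n k = {D. D \<subseteq> {..<n} \<and> card D = k}"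

definition kr :: "nat \<Rightarrow> nat \<Rightarrow> nat \<Rightarrow> real" where
  "kr n k w = of_int (coeff ([:1,-1:]^w * [:1,1:]^(n-w)) k)"

lemma pow_sum_poly:
  assumes "finite U"
  shows "(\<Sum>D\<in>Pow U. smult ((-1) ^ card (a \<inter> D)) ([:0,1:] ^ card D))
      = [:1,-1:] ^ card (U \<inter> a) * [:(1::int),1:] ^ card (U - a)"
  using assms
proof (induction U rule: finite_induct)
  case empty then show ?case by simp
next
  case (insert x U)
  define g where "g D = smult ((-1::int) ^ card (a \<inter> D)) ([:0,1:] ^ card D)" for D
  define s where "s = (if x \<in> a then -1 else (1::int))"
  have disj: "Pow U \<inter> insert x ` Pow U = {}" using insert by auto
  have inj: "inj_on (insert x) (Pow U)" using insert by (auto simp: inj_on_def)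
  have gi: "g (insert x D) = [:0, s:] * g D" if "D \<in> Pow U" for D
  proof -
    have fD: "finite D" "x \<notin> D" using that insert finite_subset by auto
    have c1: "card (insert x D) = Suc (card D)" using fD by simp
    have c2: "card (a \<inter> insert x D) = card (a \<inter> D) + (if x \<in> a then 1 else 0)"
      using fD by (auto simp: Int_insert_right)
    show ?thesis unfolding g_def c1 c2 s_def
      apply (auto simp: algebra_simps power_add) done
  qed
  have "(\<Sum>D\<in>Pow (insert x U). g D) = (\<Sum>D\<in>Pow U. g D) + (\<Sum>D\<in>insert x ` Pow U. g D)"
    unfolding Pow_insert using disj insert(1) by (intro sum.union_disjoint) auto
  also have "(\<Sum>D\<in>insert x ` Pow U. g D) = (\<Sum>D\<in>Pow U. g (insert x D))"
    using inj by (simp add: sum.reindex)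
  also have "\<dots> = [:0, s:] * (\<Sum>D\<in>Pow U. g D)"
    using gi by (simp add: sum_distrib_left)
  finally have S: "(\<Sum>D\<in>Pow (insert x U). g D) = (\<Sum>D\<in>Pow U. g D) * [:1, s:]"
    by (simp add: algebra_simps)
  have IH: "(\<Sum>D\<in>Pow U. g D) = [:1,-1:] ^ card (U \<inter> a) * [:(1::int),1:] ^ card (U - a)"
    using insert(3) unfolding g_def .
  show ?case
  proof (cases "x \<in> a")
    case True
    have "card (insert x U \<inter> a) = Suc (card (U \<inter> a))" "insert x U - a = U - a"
      using True insert by auto
    then show ?thesis using S IH True unfolding g_def s_def by (simp add: algebra_simps)
  next
    case False
    have e: "insert x U - a = insert x (U - a)" using False by auto
    have "insert x U \<inter> a = U \<inter> a" "card (insert x U - a) = Suc (card (U - a))"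
      using False insert unfolding e by auto
    then show ?thesis using S IH False unfolding g_def s_def by (simp add: algebra_simps)
  qed
qed

lemma Kr_eq:
  assumes "a \<subseteq> {..<n}"
  shows "(\<Sum>D\<in>Kset n k. chi a D) = kr n k (card a)"
proof -
  have fa: "finite a" using assms finite_subset by blast
  have "{..<n} \<inter> a = a" using assms by blast
  hence c1: "card ({..<n} \<inter> a) = card a" by simp
  have c2: "card ({..<n} - a) = n - card a" using assms fa by (simp add: card_Diff_subset)
  have P: "(\<Sum>D\<in>Pow {..<n}. monom ((-1::int) ^ card (a \<inter> D)) (card D))
      = [:1,-1:] ^ card a * [:(1::int),1:] ^ (n - card a)"
    using pow_sum_poly[of "{..<n}" a] unfolding c1 c2 by (simp add: monom_altdef)
  have "kr n k (card a) = of_int (\<Sum>D\<in>Pow {..<n}. coeff (monom ((-1::int) ^ card (a \<inter> D)) (card D)) k)"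
    unfolding kr_def P[symmetric] coeff_sum ..
  also have "\<dots> = of_int (\<Sum>D\<in>Pow {..<n}. if card D = k then (-1::int) ^ card (a \<inter> D) else 0)"
    by (simp add: coeff_monom)
  also have "\<dots> = of_int (\<Sum>D\<in>{D\<in>Pow {..<n}. card D = k}. (-1::int) ^ card (a \<inter> D))"
    by (subst sum.inter_filter) auto
  also have "{D\<in>Pow {..<n}. card D = k} = Kset n k" unfolding Kset_def by auto
  finally show ?thesis unfolding chi_def by simp
qed

lemma card_Kset: "card (Kset n k) = n choose k"
  unfolding Kset_def using n_subsets[of "{..<n}" k] by simp

lemma finite_Kset: "finite (Kset n k)"
  unfolding Kset_def by (rule finite_subset[of _ "Pow {..<n}"]) auto

lemma chi_comm: "chi a b = chi b a" unfolding chi_def by (simp add: Int_commute)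

lemma reciprocity:
  assumes "w \<le> n"
  shows "real (n choose w) * kr n k w = real (n choose k) * kr n w k"
proof -
  have "(\<Sum>A\<in>Kset n w. \<Sum>D\<in>Kset n k. chi A D) = (\<Sum>A\<in>Kset n w. kr n k w)"
    by (intro sum.cong refl) (use Kr_eq in \<open>auto simp: Kset_def\<close>)
  also have "\<dots> = real (n choose w) * kr n k w" by (simp add: card_Kset)
  finally have 1: "(\<Sum>A\<in>Kset n w. \<Sum>D\<in>Kset n k. chi A D) = real (n choose w) * kr n k w" .
  have "(\<Sum>A\<in>Kset n w. \<Sum>D\<in>Kset n k. chi A D) = (\<Sum>D\<in>Kset n k. \<Sum>A\<in>Kset n w. chi D A)"
    by (subst sum.swap) (simp add: chi_comm)
  also have "\<dots> = (\<Sum>D\<in>Kset n k. kr n w k)"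
    by (intro sum.cong refl) (use Kr_eq in \<open>auto simp: Kset_def\<close>)
  also have "\<dots> = real (n choose k) * kr n w k" by (simp add: card_Kset)
  finally show ?thesis using 1 by simp
qed

lemma kr_T:
  assumes "n \<le> 2*k" "k \<le> n"
  shows "kr n w k = of_int (Tc (2*k-n) (n-k) w)"
proof -
  have "[:1,-1:]^k * [:(1::int),1:]^(n-k) = [:1,-1:]^(2*k-n) * ([:1,-1:] * [:1,1:])^(n-k)"
  proof -
    have "k = (2*k-n) + (n-k)" using assms by simp
    hence "[:(1::int),-1:]^k = [:1,-1:]^(2*k-n) * [:1,-1:]^(n-k)" by (metis power_add)
    moreover have "[:(1::int),-1:]^(n-k) * [:1,1:]^(n-k) = ([:1,-1:] * [:1,1:])^(n-k)" by (simp only: power_mult_distrib)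
    ultimately show ?thesis by (simp add: mult.assoc)
  qed
  also have "[:1,-1:] * [:(1::int),1:] = [:1,0,-1:]" by simp
  finally show ?thesis unfolding kr_def Tc_def by simp
qed

lemma T_zero: "Tc d m 0 = 1"
  by (induction m) (simp_all add: TSuc T0)

lemma T_high: "2 \<le> d \<Longrightarrow> w > d + 2*m \<Longrightarrow> Tc d m w = 0"
  using T_bound[of d m w] unfolding beta_def by auto

lemma T_top: "2 \<le> d \<Longrightarrow> Tc d m (d + 2*m) = (-1)^(d+m)"
proof (induction m)
  case 0 then show ?case by (simp add: T0)
next
  case (Suc m)
  have "Tc d (Suc m) (d + 2 * Suc m) = Tc d m (d + 2*m + 2) - Tc d m (d + 2*m)"
    by (simp add: TSuc)
  also have "Tc d m (d + 2*m + 2) = 0" using T_high[OF Suc.prems] by simp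
  finally show ?case using Suc by simp
qed

definition K1 :: "nat \<Rightarrow> nat \<Rightarrow> real" where
  "K1 n k = real (n choose k) * (real n - 2 * real k) / real n"

lemma spectral:
  assumes kn: "k < n" and nk: "n + 2 \<le> 2*k" and a: "a \<subseteq> {..<n}" and ke: "even k"
  shows "K1 n k \<le> (\<Sum>D\<in>Kset n k. chi a D)"
    and "card a \<noteq> 1 \<Longrightarrow> card a \<noteq> n - 1 \<Longrightarrow> K1 n k < (\<Sum>D\<in>Kset n k. chi a D)"
proof -
  define w where "w = card a"
  define d where "d = 2*k - n"
  define m where "m = n - k"
  have wn: "w \<le> n" unfolding w_def using card_mono[OF _ a] by simp
  have d2: "2 \<le> d" using nk by (simp add: d_def)
  have dm: "d + 2*m = n" using kn nk by (simp add: d_def m_def)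
  have dn: "real d < real n" using kn d_def by simp
  have dreal: "real n - 2 * real k = - real d" using nk unfolding d_def by (simp add: of_nat_diff)
  define c where "c = real (n choose w)"
  define C where "C = real (n choose k)"
  have cpos: "c > 0" using wn by (simp add: c_def)
  have Cpos: "C > 0" using kn by (simp add: C_def)
  have npos: "real n > 0" using kn by simp
  define X where "X = (\<Sum>D\<in>Kset n k. chi a D)"
  have X: "X = kr n k w" unfolding X_def w_def by (rule Kr_eq[OF a])
  have cX: "c * X = C * real_of_int (Tc d m w)"
    unfolding X c_def C_def using reciprocity[OF wn, of k] kr_T[of n k w] kn nk
    by (simp add: d_def m_def)
  have TB: "\<bar>real_of_int (Tc d m w)\<bar> \<le> beta d m w" using T_bound[OF d2] by blast
  have K1: "K1 n k = - C * real d / real n" unfolding K1_def C_def dreal by simp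
  have key: "- real d * c / real n \<le> real_of_int (Tc d m w) \<and>
      (w \<noteq> 1 \<longrightarrow> w \<noteq> n - 1 \<longrightarrow> - real d * c / real n < real_of_int (Tc d m w))"
  proof (cases "w = 0 \<or> w = n")
    case True
    hence c1: "c = 1" by (auto simp: c_def)
    have "Tc d m w = 1"
    proof (cases "w = 0")
      case True then show ?thesis by (simp add: T_zero)
    next
      case False
      hence "w = d + 2*m" using \<open>w = 0 \<or> w = n\<close> dm by simp
      moreover have "d + m = k" using kn nk by (simp add: d_def m_def)
      ultimately show ?thesis using T_top[OF d2, of m] ke by simp
    qed
    moreover have "- real d * c / real n < 1" using c1 dn npos d2 by (simp add: field_simps)
    ultimately show ?thesis by simp
  next
    case False
    hence b: "beta d m w = real d * c / real n" using wn dm unfolding beta_def c_def by auto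
    have "- real d * c / real n \<le> real_of_int (Tc d m w)" using TB b by linarith
    moreover have "- real d * c / real n < real_of_int (Tc d m w)" if "w \<noteq> 1" "w \<noteq> n - 1"
    proof -
      have "2 \<le> w" "w + 2 \<le> d + 2*m" using False that wn dm by auto
      hence "\<bar>real_of_int (Tc d m w)\<bar> < real d * c / real n"
      proof -
        have "1 \<le> m" using kn by (simp add: m_def)
        then show ?thesis using T_bound[OF d2, of m w] \<open>2 \<le> w\<close> \<open>w + 2 \<le> d + 2*m\<close> unfolding dm c_def by blast
      qed
      thus ?thesis by linarith
    qed
    ultimately show ?thesis by blast
  qed
  have conv: "K1 n k \<le> X \<longleftrightarrow> - real d * c / real n \<le> real_of_int (Tc d m w)"
    "K1 n k < X \<longleftrightarrow> - real d * c / real n < real_of_int (Tc d m w)"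
  proof -
    have Xe: "X = (C / c) * real_of_int (Tc d m w)" using cX cpos by (simp add: field_simps)
    have Ke: "K1 n k = (C / c) * (- real d * c / real n)" using K1 cpos by (simp add: field_simps)
    have pos: "C / c > 0" using Cpos cpos by simp
    show "K1 n k \<le> X \<longleftrightarrow> - real d * c / real n \<le> real_of_int (Tc d m w)"
      unfolding Xe Ke using pos by (rule mult_le_cancel_left_pos)
    show "K1 n k < X \<longleftrightarrow> - real d * c / real n < real_of_int (Tc d m w)"
      unfolding Xe Ke using pos by (rule mult_less_cancel_left_pos)
  qed
  show "K1 n k \<le> (\<Sum>D\<in>Kset n k. chi a D)" using key conv X_def by simp
  show "K1 n k < (\<Sum>D\<in>Kset n k. chi a D)" if "card a \<noteq> 1" "card a \<noteq> n - 1"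
    using key conv X_def that w_def by simp
qed



definition sd :: "nat set \<Rightarrow> nat set \<Rightarrow> nat set" where
  "sd x y = (x - y) \<union> (y - x)"

definition hat :: "nat \<Rightarrow> (nat set \<Rightarrow> real) \<Rightarrow> nat set \<Rightarrow> real" where
  "hat n \<psi> a = (\<Sum>x\<in>Pow {..<n}. \<psi> x * chi a x)"

lemma card_sd: "finite A \<Longrightarrow> finite B \<Longrightarrow> card (sd A B) + 2 * card (A \<inter> B) = card A + card B"
proof -
  assume f: "finite A" "finite B"
  have "sd A B = (A \<union> B) - (A \<inter> B)" unfolding sd_def by auto
  moreover have "(A \<union> B) \<inter> (A \<inter> B) = A \<inter> B" by blast
  ultimately have "card (sd A B) = card (A \<union> B) - card (A \<inter> B)" using f by (simp add: card_Diff_subset_Int)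
  moreover have "card (A \<inter> B) \<le> card (A \<union> B)" using f by (intro card_mono) auto
  ultimately show ?thesis using card_Un_Int[OF f] by simp
qed

lemma chi_sd: "finite a \<Longrightarrow> chi a (sd x y) = chi a x * chi a y"
proof -
  assume fa: "finite a"
  have e: "a \<inter> sd x y = sd (a \<inter> x) (a \<inter> y)" unfolding sd_def by auto
  have "card (sd (a \<inter> x) (a \<inter> y)) + 2 * card ((a \<inter> x) \<inter> (a \<inter> y)) = card (a \<inter> x) + card (a \<inter> y)"
    using fa by (intro card_sd) auto
  hence "(-1::real) ^ card (a \<inter> x) * (-1) ^ card (a \<inter> y) = (-1) ^ (card (sd (a \<inter> x) (a \<inter> y)) + 2 * card ((a \<inter> x) \<inter> (a \<inter> y)))"
    by (simp add: power_add)
  also have "\<dots> = (-1) ^ card (sd (a \<inter> x) (a \<inter> y))" by (simp add: power_add power_mult)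
  finally show ?thesis unfolding chi_def e by simp
qed

lemma orth:
  assumes "finite U" "z \<subseteq> U"
  shows "(\<Sum>a\<in>Pow U. chi a z) = (if z = {} then 2 ^ card U else 0)"
  using assms
proof (induction U arbitrary: z rule: finite_induct)
  case empty then show ?case by (simp add: chi_def)
next
  case (insert x U)
  define s where "s = (if x \<in> z then -1 else (1::real))"
  have disj: "Pow U \<inter> insert x ` Pow U = {}" using insert by auto
  have inj: "inj_on (insert x) (Pow U)"
  proof (rule inj_onI)
    fix a b assume "a \<in> Pow U" "b \<in> Pow U" "insert x a = insert x b"
    then show "a = b" using insert(2) by (metis Diff_insert_absorb Pow_iff subsetD)
  qed
  have e1: "chi a z = chi a (z - {x})" if "a \<in> Pow U" for a
  proof -
    have "a \<inter> z = a \<inter> (z - {x})" using that insert by auto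
    thus ?thesis by (simp add: chi_def)
  qed
  have e2: "chi (insert x a) z = s * chi a (z - {x})" if "a \<in> Pow U" for a
  proof -
    have fa: "finite (a \<inter> z)" using that insert finite_subset by blast
    have xn: "x \<notin> a \<inter> z" using that insert by auto
    show ?thesis
    proof (cases "x \<in> z")
      case True
      have "insert x a \<inter> z = insert x (a \<inter> z)" using True by auto
      hence "card (insert x a \<inter> z) = Suc (card (a \<inter> z))" using fa xn by simp
      then show ?thesis using e1[OF that] True by (simp add: chi_def s_def)
    next
      case False
      have "insert x a \<inter> z = a \<inter> z" using False by auto
      then show ?thesis using e1[OF that] False by (simp add: chi_def s_def)
    qed
  qed
  have "(\<Sum>a\<in>Pow (insert x U). chi a z) = (\<Sum>a\<in>Pow U. chi a z) + (\<Sum>a\<in>insert x ` Pow U. chi a z)"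
    unfolding Pow_insert using disj insert(1) by (intro sum.union_disjoint) auto
  also have "(\<Sum>a\<in>insert x ` Pow U. chi a z) = (\<Sum>a\<in>Pow U. chi (insert x a) z)"
    using inj by (simp add: sum.reindex)
  also have "\<dots> = s * (\<Sum>a\<in>Pow U. chi a (z - {x}))" using e2 by (simp add: sum_distrib_left)
  also have "(\<Sum>a\<in>Pow U. chi a z) = (\<Sum>a\<in>Pow U. chi a (z - {x}))" using e1 by simp
  finally have S: "(\<Sum>a\<in>Pow (insert x U). chi a z) = (1 + s) * (\<Sum>a\<in>Pow U. chi a (z - {x}))"
    by (simp add: algebra_simps)
  have IH: "(\<Sum>a\<in>Pow U. chi a (z - {x})) = (if z - {x} = {} then 2 ^ card U else 0)"
  proof -
    have "z - {x} \<subseteq> U" using insert(4) by auto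
    then show ?thesis using insert(3)[of "z - {x}"] by simp
  qed
  show ?case
  proof (cases "x \<in> z")
    case True
    then show ?thesis using S by (auto simp: s_def)
  next
    case False
    hence "z - {x} = z" by auto
    then show ?thesis using S IH False insert by (simp add: s_def)
  qed
qed

lemma sd_subset: "x \<subseteq> U \<Longrightarrow> y \<subseteq> U \<Longrightarrow> sd x y \<subseteq> U" unfolding sd_def by auto

lemma sd_empty_iff: "sd x y = {} \<longleftrightarrow> x = y" unfolding sd_def by auto

lemma delta:
  assumes "x \<in> Pow {..<n}" "y \<in> Pow {..<n}"
  shows "(\<Sum>a\<in>Pow {..<n}. chi a x * chi a y) = (if x = y then 2 ^ n else 0)"
proof -
  have "(\<Sum>a\<in>Pow {..<n}. chi a x * chi a y) = (\<Sum>a\<in>Pow {..<n}. chi a (sd x y))"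
    by (intro sum.cong refl) (auto simp: chi_sd finite_subset)
  also have "\<dots> = (if x = y then 2 ^ n else 0)"
    using orth[of "{..<n}" "sd x y"] sd_subset[of x "{..<n}" y] assms by (simp add: sd_empty_iff)
  finally show ?thesis .
qed

lemma sum_swap3:
  "(\<Sum>x\<in>A. \<Sum>y\<in>B. \<Sum>z\<in>C. f x y z) = (\<Sum>z\<in>C. \<Sum>y\<in>B. \<Sum>x\<in>A. f x y z)"
proof -
  have "(\<Sum>x\<in>A. \<Sum>y\<in>B. \<Sum>z\<in>C. f x y z) = (\<Sum>x\<in>A. \<Sum>z\<in>C. \<Sum>y\<in>B. f x y z)"
    by (intro sum.cong refl) (rule sum.swap)
  also have "\<dots> = (\<Sum>z\<in>C. \<Sum>x\<in>A. \<Sum>y\<in>B. f x y z)" by (rule sum.swap)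
  also have "\<dots> = (\<Sum>z\<in>C. \<Sum>y\<in>B. \<Sum>x\<in>A. f x y z)"
    by (intro sum.cong refl) (rule sum.swap)
  finally show ?thesis .
qed

lemma inversion:
  assumes "y \<in> Pow {..<n}"
  shows "(\<Sum>a\<in>Pow {..<n}. hat n \<psi> a * chi a y) = 2 ^ n * \<psi> y"
proof -
  have "(\<Sum>a\<in>Pow {..<n}. hat n \<psi> a * chi a y) = (\<Sum>a\<in>Pow {..<n}. \<Sum>x\<in>Pow {..<n}. \<psi> x * (chi a x * chi a y))"
    unfolding hat_def by (simp add: sum_distrib_right mult.assoc)
  also have "\<dots> = (\<Sum>x\<in>Pow {..<n}. \<psi> x * (\<Sum>a\<in>Pow {..<n}. chi a x * chi a y))"
    by (subst sum.swap) (simp add: sum_distrib_left)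
  also have "\<dots> = (\<Sum>x\<in>Pow {..<n}. \<psi> x * (if x = y then 2 ^ n else 0))"
    by (intro sum.cong refl) (use delta assms in auto)
  also have "\<dots> = 2 ^ n * \<psi> y" using assms by (simp add: if_distrib sum.delta' mult.commute cong: if_cong)
  finally show ?thesis .
qed

lemma fourier_quad:
  assumes DP: "Dset \<subseteq> Pow {..<n}"
  shows "2 ^ n * (\<Sum>x\<in>Pow {..<n}. \<Sum>D\<in>Dset. \<psi> x * \<psi> (sd x D))
    = (\<Sum>a\<in>Pow {..<n}. (hat n \<psi> a)\<^sup>2 * (\<Sum>D\<in>Dset. chi a D))"
proof -
  let ?P = "Pow {..<n}"
  have "2 ^ n * (\<Sum>x\<in>?P. \<Sum>D\<in>Dset. \<psi> x * \<psi> (sd x D))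
      = (\<Sum>x\<in>?P. \<Sum>D\<in>Dset. \<psi> x * (2 ^ n * \<psi> (sd x D)))"
    by (simp add: sum_distrib_left mult.left_commute)
  also have "\<dots> = (\<Sum>x\<in>?P. \<Sum>D\<in>Dset. \<Sum>a\<in>?P. \<psi> x * hat n \<psi> a * chi a x * chi a D)"
  proof (intro sum.cong refl)
    fix x D assume x: "x \<in> ?P" and D: "D \<in> Dset"
    have sP: "sd x D \<in> ?P" using x D DP sd_subset by blast
    have "2 ^ n * \<psi> (sd x D) = (\<Sum>a\<in>?P. hat n \<psi> a * chi a (sd x D))"
      using inversion[OF sP] by simp
    also have "\<dots> = (\<Sum>a\<in>?P. hat n \<psi> a * chi a x * chi a D)"
      by (intro sum.cong refl) (auto simp: chi_sd finite_subset)
    finally show "\<psi> x * (2 ^ n * \<psi> (sd x D)) = (\<Sum>a\<in>?P. \<psi> x * hat n \<psi> a * chi a x * chi a D)"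
      by (simp add: sum_distrib_left mult.assoc)
  qed
  also have "\<dots> = (\<Sum>a\<in>?P. \<Sum>D\<in>Dset. \<Sum>x\<in>?P. \<psi> x * hat n \<psi> a * chi a x * chi a D)"
    by (rule sum_swap3)
  also have "\<dots> = (\<Sum>a\<in>?P. \<Sum>D\<in>Dset. hat n \<psi> a * chi a D * hat n \<psi> a)"
    unfolding hat_def by (intro sum.cong refl) (simp add: sum_distrib_left sum_distrib_right mult_ac)
  also have "\<dots> = (\<Sum>a\<in>?P. (hat n \<psi> a)\<^sup>2 * (\<Sum>D\<in>Dset. chi a D))"
    by (intro sum.cong refl) (simp add: sum_distrib_left sum_distrib_right power2_eq_square mult_ac)
  finally show ?thesis .
qed



definition Qf :: "nat \<Rightarrow> nat \<Rightarrow> (nat set \<Rightarrow> real) \<Rightarrow> real" where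
  "Qf n k \<psi> = (\<Sum>x\<in>Pow {..<n}. \<Sum>D\<in>Kset n k. \<psi> x * \<psi> (sd x D))"

lemma parseval: "2 ^ n * (\<Sum>x\<in>Pow {..<n}. (\<psi> x)\<^sup>2) = (\<Sum>a\<in>Pow {..<n}. (hat n \<psi> a)\<^sup>2)"
proof -
  have "2 ^ n * (\<Sum>x\<in>Pow {..<n}. \<Sum>D\<in>{{}}. \<psi> x * \<psi> (sd x D))
    = (\<Sum>a\<in>Pow {..<n}. (hat n \<psi> a)\<^sup>2 * (\<Sum>D\<in>{{}}. chi a D))"
    by (rule fourier_quad) auto
  then show ?thesis by (simp add: sd_def chi_def power2_eq_square)
qed

lemma quad_bound:
  assumes kn: "k < n" and nk: "n + 2 \<le> 2*k" and ke: "even k"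
  shows "K1 n k * (\<Sum>x\<in>Pow {..<n}. (\<psi> x)\<^sup>2) \<le> Qf n k \<psi>"
    and "K1 n k * (\<Sum>x\<in>Pow {..<n}. (\<psi> x)\<^sup>2) = Qf n k \<psi> \<Longrightarrow>
         a \<in> Pow {..<n} \<Longrightarrow> card a \<noteq> 1 \<Longrightarrow> card a \<noteq> n - 1 \<Longrightarrow> hat n \<psi> a = 0"
proof -
  let ?P = "Pow {..<n}"
  have KP: "Kset n k \<subseteq> ?P" unfolding Kset_def by auto
  have eq: "2 ^ n * (Qf n k \<psi> - K1 n k * (\<Sum>x\<in>?P. (\<psi> x)\<^sup>2))
      = (\<Sum>a\<in>?P. (hat n \<psi> a)\<^sup>2 * ((\<Sum>D\<in>Kset n k. chi a D) - K1 n k))"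
  proof -
    have "2 ^ n * (Qf n k \<psi> - K1 n k * (\<Sum>x\<in>?P. (\<psi> x)\<^sup>2))
        = 2 ^ n * Qf n k \<psi> - K1 n k * (2 ^ n * (\<Sum>x\<in>?P. (\<psi> x)\<^sup>2))"
      by (simp add: algebra_simps)
    also have "\<dots> = (\<Sum>a\<in>?P. (hat n \<psi> a)\<^sup>2 * (\<Sum>D\<in>Kset n k. chi a D)) - K1 n k * (\<Sum>a\<in>?P. (hat n \<psi> a)\<^sup>2)"
      unfolding parseval Qf_def fourier_quad[OF KP] ..
    also have "\<dots> = (\<Sum>a\<in>?P. (hat n \<psi> a)\<^sup>2 * ((\<Sum>D\<in>Kset n k. chi a D) - K1 n k))"
      by (simp add: sum_distrib_left sum_subtractf algebra_simps)
    finally show ?thesis .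
  qed
  have nonneg: "\<forall>a\<in>?P. 0 \<le> (hat n \<psi> a)\<^sup>2 * ((\<Sum>D\<in>Kset n k. chi a D) - K1 n k)"
    using spectral(1)[OF kn nk _ ke] by auto
  hence "0 \<le> 2 ^ n * (Qf n k \<psi> - K1 n k * (\<Sum>x\<in>?P. (\<psi> x)\<^sup>2))"
    unfolding eq by (intro sum_nonneg) auto
  thus "K1 n k * (\<Sum>x\<in>?P. (\<psi> x)\<^sup>2) \<le> Qf n k \<psi>" by (simp add: zero_le_mult_iff) (metis not_less zero_less_numeral zero_less_power)
  assume e: "K1 n k * (\<Sum>x\<in>?P. (\<psi> x)\<^sup>2) = Qf n k \<psi>" and a: "a \<in> ?P" "card a \<noteq> 1" "card a \<noteq> n - 1"
  have "(\<Sum>a\<in>?P. (hat n \<psi> a)\<^sup>2 * ((\<Sum>D\<in>Kset n k. chi a D) - K1 n k)) = 0"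
    unfolding eq[symmetric] using e by simp
  hence "\<forall>a\<in>?P. (hat n \<psi> a)\<^sup>2 * ((\<Sum>D\<in>Kset n k. chi a D) - K1 n k) = 0"
    using nonneg by (subst sum_nonneg_eq_0_iff[symmetric]) auto
  hence "(hat n \<psi> a)\<^sup>2 * ((\<Sum>D\<in>Kset n k. chi a D) - K1 n k) = 0" using a by blast
  moreover have "(\<Sum>D\<in>Kset n k. chi a D) - K1 n k > 0"
    using spectral(2)[OF kn nk _ ke, of a] a by auto
  ultimately show "hat n \<psi> a = 0" by simp
qed

lemma three_distinct:
  fixes n i :: nat
  assumes "5 \<le> n" "i < n"
  obtains j l where "j < n" "l < n" "j \<noteq> i" "l \<noteq> i" "j \<noteq> l"
proof -
  define j :: nat where "j = (if i = 0 then 1 else 0)"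
  define l :: nat where "l = (if i = 2 then 3 else 2)"
  have "j < n" "l < n" "j \<noteq> i" "l \<noteq> i" "j \<noteq> l" using assms by (auto simp: j_def l_def)
  then show thesis using that by blast
qed

lemma dict:
  fixes u :: "nat \<Rightarrow> real"
  assumes n5: "5 \<le> n" and s1: "(\<Sum>i<n. u i) = 1"
    and pr: "\<And>i j. i < n \<Longrightarrow> j < n \<Longrightarrow> i \<noteq> j \<Longrightarrow> u i + u j = 0 \<or> u i + u j = 1"
  shows "\<exists>i<n. u i = 1 \<and> (\<forall>j<n. j \<noteq> i \<longrightarrow> u j = 0)"
proof -
  have vals: "u i = -1/2 \<or> u i = 0 \<or> u i = 1/2 \<or> u i = 1" if iN: "i < n" for i
  proof -
    obtain j l where jl: "j < n" "l < n" "j \<noteq> i" "l \<noteq> i" "j \<noteq> l" using three_distinct[OF n5 iN] by blast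
    have "u i = ((u i + u j) + (u i + u l) - (u j + u l)) / 2" by simp
    then show ?thesis using pr[OF iN jl(1)] pr[OF iN jl(2)] pr[OF jl(1) jl(2) jl(5)] jl by auto
  qed
  show ?thesis
  proof (cases "\<exists>i<n. u i = 1")
    case True
    then obtain i where i: "i < n" "u i = 1" by blast
    have "u j = 0" if "j < n" "j \<noteq> i" for j
      using pr[OF i(1) that(1)] that vals[OF that(1)] i by auto
    then show ?thesis using i by blast
  next
    case False
    hence v3: "u i = -1/2 \<or> u i = 0 \<or> u i = 1/2" if "i < n" for i using vals[OF that] that by blast
    show ?thesis
    proof (cases "\<exists>i<n. u i = 0")
      case True
      then obtain i where i: "i < n" "u i = 0" by blast
      have z: "u j = 0" if "j < n" for j
      proof (cases "j = i")
        case True then show ?thesis using i by simp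
      next
        case False
        then show ?thesis using pr[OF i(1) that] v3[OF that] i by auto
      qed
      have "(\<Sum>i<n. u i) = 0" using z by simp
      then show ?thesis using s1 by simp
    next
      case False
      hence pm: "u i = -1/2 \<or> u i = 1/2" if "i < n" for i using v3[OF that] that by blast
      have False
      proof (cases "\<exists>i<n. u i = -1/2")
        case True
        then obtain i where i: "i < n" "u i = -1/2" by blast
        have h: "u j = 1/2" if "j \<in> {..<n} - {i}" for j
        proof -
          have "j < n" "j \<noteq> i" using that by auto
          then show ?thesis using pr[OF i(1) \<open>j < n\<close>] pm[OF \<open>j<n\<close>] i by auto
        qed
        have "(\<Sum>j<n. u j) = u i + (\<Sum>j\<in>{..<n} - {i}. u j)"
          using i by (simp add: sum.remove)
        also have "(\<Sum>j\<in>{..<n} - {i}. u j) = (\<Sum>j\<in>{..<n} - {i}. 1/2)"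
          using h by (intro sum.cong) auto
        also have "\<dots> = real (n - 1) / 2" using i by (simp add: card_Diff_singleton)
        finally have "(\<Sum>j<n. u j) = real (n - 1) / 2 - 1/2" using i by simp
        moreover have "real n \<ge> 5" using n5 by simp
        ultimately show False using s1 by (simp add: field_simps)
      next
        case False
        hence "u j = 1/2" if "j < n" for j using pm[OF that] that by blast
        hence "(\<Sum>j<n. u j) = (\<Sum>j<n. 1/2)" by (intro sum.cong) auto
        hence "(\<Sum>j<n. u j) = real n / 2" by simp
        then show False using s1 n5 by simp
      qed
      then show ?thesis ..
    qed
  qed
qed

lemma chi_co:
  assumes "x \<subseteq> {..<n}" "even (card x)" "i < n"
  shows "chi ({..<n} - {i}) x = chi {i} x"
proof -
  have fx: "finite x" using assms(1) finite_subset by blast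
  have e: "({..<n} - {i}) \<inter> x = x - {i}" using assms by auto
  show ?thesis
  proof (cases "i \<in> x")
    case True
    have c: "card (x - {i}) = card x - 1" using True fx by simp
    have "card x \<ge> 1" using True fx card_0_eq by fastforce
    then obtain t where t: "card x = Suc t" by (metis Suc_pred' less_le_trans zero_less_one)
    with assms(2) have "odd t" by simp
    have "{i} \<inter> x = {i}" using True by auto
    then show ?thesis unfolding chi_def e c using t \<open>odd t\<close> by simp
  next
    case False
    have "x - {i} = x" "{i} \<inter> x = {}" using False by auto
    then show ?thesis unfolding chi_def e using assms(2) by simp
  qed
qed

lemma hat_co:
  assumes zero: "\<forall>x\<in>Pow {..<n}. odd (card x) \<longrightarrow> \<psi> x = 0" and i: "i < n"
  shows "hat n \<psi> ({..<n} - {i}) = hat n \<psi> {i}"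
  unfolding hat_def
proof (intro sum.cong refl)
  fix x assume x: "x \<in> Pow {..<n}"
  show "\<psi> x * chi ({..<n} - {i}) x = \<psi> x * chi {i} x"
  proof (cases "even (card x)")
    case True then show ?thesis using chi_co[of x n i] x i by simp
  next
    case False then show ?thesis using zero x by simp
  qed
qed

lemma expansion:
  assumes n5: "5 \<le> n"
    and zero: "\<forall>x\<in>Pow {..<n}. odd (card x) \<longrightarrow> \<psi> x = 0"
    and hz: "\<forall>a\<in>Pow {..<n}. card a \<noteq> 1 \<longrightarrow> card a \<noteq> n - 1 \<longrightarrow> hat n \<psi> a = 0"
    and x: "x \<subseteq> {..<n}" "even (card x)"
  shows "2 ^ n * \<psi> x = 2 * (\<Sum>i<n. hat n \<psi> {i} * chi {i} x)"
proof -
  let ?P = "Pow {..<n}"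
  define g where "g a = hat n \<psi> a * chi a x" for a
  define A1 where "A1 = (\<lambda>i. {i}) ` {..<n}"
  define A2 where "A2 = (\<lambda>i. {..<n} - {i}) ` {..<n}"
  have sub: "A1 \<union> A2 \<subseteq> ?P" unfolding A1_def A2_def by auto
  have rest: "\<forall>a\<in>?P - (A1 \<union> A2). g a = 0"
  proof
    fix a assume a: "a \<in> ?P - (A1 \<union> A2)"
    have "card a \<noteq> 1"
    proof
      assume "card a = 1"
      then obtain i where "a = {i}" by (auto simp: card_Suc_eq)
      then show False using a unfolding A1_def by auto
    qed
    moreover have "card a \<noteq> n - 1"
    proof
      assume ca: "card a = n - 1"
      have aP: "a \<subseteq> {..<n}" using a by auto
      have "card ({..<n} - a) = 1" using ca aP n5 by (simp add: card_Diff_subset finite_subset)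
      then obtain i where i: "{..<n} - a = {i}" by (auto simp: card_Suc_eq)
      hence "i < n" by auto
      moreover have "a = {..<n} - {i}" using i aP by auto
      ultimately show False using a unfolding A2_def by auto
    qed
    ultimately show "g a = 0" using hz a unfolding g_def by auto
  qed
  have disj: "A1 \<inter> A2 = {}"
  proof -
    have "card b = 1" if "b \<in> A1" for b using that unfolding A1_def by auto
    moreover have "card b = n - 1" if "b \<in> A2" for b using that unfolding A2_def by (auto simp: card_Diff_singleton)
    ultimately show ?thesis using n5 by fastforce
  qed
  have "2 ^ n * \<psi> x = (\<Sum>a\<in>?P. g a)" using inversion[of x n \<psi>] x unfolding g_def by simp
  also have "\<dots> = (\<Sum>a\<in>A1 \<union> A2. g a)"
    by (rule sum.mono_neutral_right) (use sub rest in auto)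
  also have "\<dots> = (\<Sum>a\<in>A1. g a) + (\<Sum>a\<in>A2. g a)"
    using disj by (intro sum.union_disjoint) (auto simp: A1_def A2_def)
  also have "(\<Sum>a\<in>A1. g a) = (\<Sum>i<n. hat n \<psi> {i} * chi {i} x)"
    unfolding A1_def g_def by (subst sum.reindex) (auto simp: inj_on_def)
  also have "(\<Sum>a\<in>A2. g a) = (\<Sum>i<n. hat n \<psi> ({..<n} - {i}) * chi ({..<n} - {i}) x)"
    unfolding A2_def g_def by (subst sum.reindex) (auto simp: inj_on_def)
  also have "\<dots> = (\<Sum>i<n. hat n \<psi> {i} * chi {i} x)"
    using hat_co[OF zero] chi_co[OF x] by simp
  finally show ?thesis by simp
qed

lemma dictator:
  assumes n5: "5 \<le> n"
    and pm: "\<forall>x\<in>Pow {..<n}. even (card x) \<longrightarrow> \<psi> x = 1 \<or> \<psi> x = -1"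
    and zero: "\<forall>x\<in>Pow {..<n}. odd (card x) \<longrightarrow> \<psi> x = 0"
    and hz: "\<forall>a\<in>Pow {..<n}. card a \<noteq> 1 \<longrightarrow> card a \<noteq> n - 1 \<longrightarrow> hat n \<psi> a = 0"
  shows "\<exists>i<n. \<exists>s. (s = 1 \<or> s = -1) \<and> (\<forall>x\<in>Pow {..<n}. even (card x) \<longrightarrow> \<psi> x = s * chi {i} x)"
proof -
  define e where "e i = 2 * hat n \<psi> {i} / 2 ^ n" for i
  have ex: "\<psi> x = (\<Sum>l<n. e l * chi {l} x)" if "x \<subseteq> {..<n}" "even (card x)" for x
  proof -
    have "2 ^ n * \<psi> x = 2 * (\<Sum>i<n. hat n \<psi> {i} * chi {i} x)"
      using expansion[OF n5 zero hz that] .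
    hence "\<psi> x = 2 * (\<Sum>i<n. hat n \<psi> {i} * chi {i} x) / 2 ^ n" by (simp add: field_simps)
    also have "\<dots> = (\<Sum>l<n. e l * chi {l} x)"
      unfolding e_def by (simp add: sum_distrib_left sum_divide_distrib mult.assoc)
    finally show ?thesis .
  qed
  define \<sigma> where "\<sigma> = \<psi> {}"
  have \<sigma>: "\<sigma> = 1 \<or> \<sigma> = -1" using pm unfolding \<sigma>_def by auto
  have \<sigma>sq: "\<sigma> * \<sigma> = 1" using \<sigma> by auto
  have sumE: "(\<Sum>l<n. e l) = \<sigma>" using ex[of "{}"] unfolding \<sigma>_def by (simp add: chi_def)
  have pair: "\<psi> {i, j} = \<sigma> - 2 * e i - 2 * e j" if ij: "i < n" "j < n" "i \<noteq> j" for i j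
  proof -
    have "\<psi> {i, j} = (\<Sum>l<n. e l * chi {l} {i, j})" using ex[of "{i,j}"] ij by simp
    also have "\<dots> = (\<Sum>l<n. e l - 2 * (if l = i then e l else 0) - 2 * (if l = j then e l else 0))"
      by (intro sum.cong refl) (use ij in \<open>auto simp: chi_def\<close>)
    also have "\<dots> = \<sigma> - 2 * e i - 2 * e j"
      using ij sumE by (simp add: sum_subtractf sum_distrib_left[symmetric])
    finally show ?thesis .
  qed
  define u where "u l = \<sigma> * e l" for l
  have su: "(\<Sum>l<n. u l) = 1" unfolding u_def using sumE \<sigma>sq by (simp add: sum_distrib_left[symmetric])
  have pu: "u i + u j = 0 \<or> u i + u j = 1" if "i < n" "j < n" "i \<noteq> j" for i j
  proof -
    have "u i + u j = \<sigma> * (e i + e j)" by (simp add: u_def algebra_simps)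
    also have "e i + e j = (\<sigma> - \<psi> {i, j}) / 2" using pair[OF that] by simp
    finally have "u i + u j = (1 - \<sigma> * \<psi> {i,j}) / 2" using \<sigma>sq by (simp add: algebra_simps)
    moreover have "\<psi> {i,j} = 1 \<or> \<psi> {i,j} = -1" using pm that by auto
    ultimately show ?thesis using \<sigma> by auto
  qed
  obtain i0 where i0: "i0 < n" "u i0 = 1" "\<forall>j<n. j \<noteq> i0 \<longrightarrow> u j = 0"
    using dict[OF n5 su pu] by blast
  have eu: "e l = \<sigma> * u l" for l using \<sigma>sq unfolding u_def by (simp add: mult.assoc[symmetric])
  have "\<psi> x = \<sigma> * chi {i0} x" if "x \<in> Pow {..<n}" "even (card x)" for x
  proof -
    have "\<psi> x = (\<Sum>l<n. e l * chi {l} x)" using ex that by auto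
    also have "\<dots> = (\<Sum>l<n. if l = i0 then \<sigma> * chi {i0} x else 0)"
      by (intro sum.cong refl) (use i0 eu in auto)
    also have "\<dots> = \<sigma> * chi {i0} x" using i0 by simp
    finally show ?thesis .
  qed
  then show ?thesis using i0(1) \<sigma> by blast
qed



lemma adj_sd: "H_adj j S T \<longleftrightarrow> card (sd S T) = j" by (simp add: H_adj_def sd_def)

lemma chi_single: "chi {i} x = (if i \<in> x then -1 else 1)"
  by (auto simp: chi_def Int_insert_left)

lemma card_fibers:
  assumes "finite J" "finite A"
  shows "card {j\<in>J. g j \<in> A} = (\<Sum>i\<in>A. card {j\<in>J. g j = i})"
proof -
  have "{j\<in>J. g j \<in> A} = (\<Union>i\<in>A. {j\<in>J. g j = i})" by auto
  moreover have "card (\<Union>i\<in>A. {j\<in>J. g j = i}) = (\<Sum>i\<in>A. card {j\<in>J. g j = i})"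
    using assms by (intro card_UN_disjoint) auto
  ultimately show ?thesis by simp
qed

lemma even_sd: "finite x \<Longrightarrow> finite D \<Longrightarrow> even (card x) \<Longrightarrow> even (card D) \<Longrightarrow> even (card (sd x D))"
  using card_sd[of x D] by presburger

lemma sum_sign:
  assumes "S \<subseteq> {..<N}"
  shows "(\<Sum>j<N. if j \<in> S then -1 else 1 :: real) = real N - 2 * real (card S)"
proof -
  have "(\<Sum>j<N. if j \<in> S then -1 else 1 :: real) = (\<Sum>j<N. 1 - 2 * (if j \<in> S then 1 else 0))"
    by (intro sum.cong) auto
  also have "\<dots> = real N - 2 * (\<Sum>j<N. if j \<in> S then 1 else 0)"
    by (simp add: sum_subtractf sum_distrib_left)
  also have "(\<Sum>j<N. if j \<in> S then 1 else 0 :: real) = real (card ({..<N} \<inter> S))"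
    by (subst sum.inter_restrict[symmetric]) auto
  also have "{..<N} \<inter> S = S" using assms by auto
  finally show ?thesis .
qed

definition rep :: "nat \<Rightarrow> nat \<Rightarrow> nat set \<Rightarrow> nat set" where
  "rep n t S = {j. j div n < t \<and> j mod n \<in> S}"

lemma rep_image:
  assumes "S \<subseteq> {..<n}"
  shows "rep n t S = (\<lambda>(i,s). i + n * s) ` (S \<times> {..<t})"
proof
  show "rep n t S \<subseteq> (\<lambda>(i,s). i + n * s) ` (S \<times> {..<t})"
  proof
    fix j assume "j \<in> rep n t S"
    hence "j mod n \<in> S" "j div n < t" by (auto simp: rep_def)
    moreover have "j = j mod n + n * (j div n)" by simp
    ultimately show "j \<in> (\<lambda>(i,s). i + n * s) ` (S \<times> {..<t})" by force
  qed
next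
  show "(\<lambda>(i,s). i + n * s) ` (S \<times> {..<t}) \<subseteq> rep n t S"
  proof
    fix j assume "j \<in> (\<lambda>(i,s). i + n * s) ` (S \<times> {..<t})"
    then obtain i s where "i \<in> S" "s < t" "j = i + n * s" by auto
    moreover have "i < n" using \<open>i \<in> S\<close> assms by auto
    ultimately show "j \<in> rep n t S" by (simp add: rep_def)
  qed
qed

lemma rep_card:
  assumes "S \<subseteq> {..<n}"
  shows "card (rep n t S) = t * card S"
proof -
  have inj: "inj_on (\<lambda>(i,s). i + n * s) (S \<times> {..<t})"
  proof (rule inj_onI, clarsimp)
    fix i s i' s' assume "i \<in> S" "i' \<in> S" "i + n * s = i' + n * s'"
    moreover have "i < n" "i' < n" using \<open>i \<in> S\<close> \<open>i' \<in> S\<close> assms by auto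
    have n0: "0 < n" using \<open>i < n\<close> by simp
    have "(i + n * s) mod n = i" "(i' + n * s') mod n = i'" using \<open>i < n\<close> \<open>i' < n\<close> by auto
    moreover have "(i + n * s) div n = s" "(i' + n * s') div n = s'" using \<open>i < n\<close> \<open>i' < n\<close> n0 by auto
    ultimately show "i = i' \<and> s = s'" using \<open>i + n * s = i' + n * s'\<close> by metis
  qed
  have "finite S" using assms finite_subset by blast
  then show ?thesis unfolding rep_image[OF assms] card_image[OF inj] by (simp add: card_cartesian_product)
qed

lemma rep_sub: assumes "0 < n" shows "rep n t S \<subseteq> {..<n * t}"
proof
  fix j assume "j \<in> rep n t S"
  hence "j div n < t" by (simp add: rep_def)
  then show "j \<in> {..<n * t}" using assms
    by (simp add: div_less_iff_less_mult mult.commute)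
qed

lemma rep_sd: "sd (rep n t S) (rep n t T) = rep n t (sd S T)"
  unfolding rep_def sd_def by auto

lemma rep_hom:
  assumes "0 < n" "n' = n * t" "k' = k * t"
  shows "H_hom n k n' k' (rep n t)"
  unfolding H_hom_def
proof (intro conjI funcsetI ballI impI)
  fix S assume "S \<in> H_verts n"
  hence S: "S \<subseteq> {..<n}" "even (card S)" by (auto simp: H_verts_def)
  then show "rep n t S \<in> H_verts n'"
    using rep_card[OF S(1), of t] rep_sub[OF assms(1), of t S] assms(2) by (simp add: H_verts_def)
next
  fix S T assume "S \<in> H_verts n" "T \<in> H_verts n" "H_adj k S T"
  hence "sd S T \<subseteq> {..<n}" "card (sd S T) = k" by (auto simp: H_verts_def adj_sd sd_def)
  then show "H_adj k' (rep n t S) (rep n t T)"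
    unfolding adj_sd rep_sd using rep_card[of "sd S T" n t] assms(3) by simp
qed

lemma sd_sd: "sd x (sd x D) = D" unfolding sd_def by auto

lemma hom_struct:
  assumes kn: "k < n" and nk: "n + 2 \<le> 2*k" and ke: "even k"
    and ratio: "n * k' = n' * k" and k'pos: "0 < k'"
    and hom: "H_hom n k n' k' f"
  shows "\<exists>t. n' = n * t \<and> k' = k * t \<and> H_induced_embedding n k n' k' f"
proof -
  let ?P = "Pow {..<n}"
  define E where "E = H_verts n"
  have Ealt: "x \<in> E \<longleftrightarrow> x \<in> ?P \<and> even (card x)" for x by (auto simp: E_def H_verts_def)
  have EP: "E \<subseteq> ?P" using Ealt by blast
  have n5: "5 \<le> n" using kn nk ke by presburger
  have fE: "f x \<in> H_verts n'" if "x \<in> E" for x using hom that unfolding H_hom_def E_def by blast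
  have fsub: "f x \<subseteq> {..<n'}" if "x \<in> E" for x using fE[OF that] by (simp add: H_verts_def)
  have adjf: "card (sd (f x) (f y)) = k'" if "x \<in> E" "y \<in> E" "card (sd x y) = k" for x y
    using hom that unfolding H_hom_def E_def adj_sd by blast
  have sdE: "sd x D \<in> E" "card (sd x (sd x D)) = k" if "x \<in> E" "D \<in> Kset n k" for x D
  proof -
    have x: "x \<subseteq> {..<n}" "even (card x)" using that Ealt by auto
    have D: "D \<subseteq> {..<n}" "card D = k" using that by (auto simp: Kset_def)
    have "finite x" "finite D" using x D finite_subset by auto
    hence "even (card (sd x D))" using even_sd x D ke by simp
    moreover have "sd x D \<subseteq> {..<n}" using x D sd_subset by blast
    ultimately show "sd x D \<in> E" using Ealt by auto
    show "card (sd x (sd x D)) = k" using D by (simp add: sd_sd)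
  qed
  define \<psi> where "\<psi> j x = (if x \<in> E then (if j \<in> f x then -1 else 1) else (0::real))" for j x
  have inner: "(\<Sum>j<n'. \<psi> j x * \<psi> j (sd x D)) = (if x \<in> E then real n' - 2 * real k' else 0)"
    if "D \<in> Kset n k" for x D
  proof (cases "x \<in> E")
    case True
    have yE: "sd x D \<in> E" using sdE[OF True that] by simp
    have "(\<Sum>j<n'. \<psi> j x * \<psi> j (sd x D)) = (\<Sum>j<n'. if j \<in> sd (f x) (f (sd x D)) then -1 else 1)"
      by (intro sum.cong refl) (use True yE in \<open>auto simp: \<psi>_def sd_def\<close>)
    also have "\<dots> = real n' - 2 * real (card (sd (f x) (f (sd x D))))"
      by (rule sum_sign) (use fsub True yE sd_subset in blast)
    also have "card (sd (f x) (f (sd x D))) = k'" using adjf[OF True yE] sdE[OF True that] by simp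
    finally show ?thesis using True by simp
  next
    case False
    then show ?thesis by (simp add: \<psi>_def)
  qed
  have cardE_sum: "(\<Sum>x\<in>?P. if x \<in> E then v else 0) = real (card E) * v" for v :: real
  proof -
    have "(\<Sum>x\<in>?P. if x \<in> E then v else 0) = (\<Sum>x\<in>?P \<inter> E. v)"
      by (subst sum.inter_restrict) auto
    also have "?P \<inter> E = E" using EP by blast
    finally show ?thesis by simp
  qed
  have total: "(\<Sum>j<n'. Qf n k (\<psi> j)) = real (card E) * (real (n choose k) * (real n' - 2 * real k'))"
  proof -
    have "(\<Sum>j<n'. Qf n k (\<psi> j)) = (\<Sum>x\<in>?P. \<Sum>j<n'. \<Sum>D\<in>Kset n k. \<psi> j x * \<psi> j (sd x D))"
      unfolding Qf_def by (rule sum.swap)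
    also have "\<dots> = (\<Sum>x\<in>?P. \<Sum>D\<in>Kset n k. \<Sum>j<n'. \<psi> j x * \<psi> j (sd x D))"
      by (intro sum.cong refl) (rule sum.swap)
    also have "\<dots> = (\<Sum>x\<in>?P. \<Sum>D\<in>Kset n k. if x \<in> E then real n' - 2 * real k' else 0)"
      using inner by (intro sum.cong refl) auto
    also have "\<dots> = (\<Sum>x\<in>?P. if x \<in> E then real (n choose k) * (real n' - 2 * real k') else 0)"
      by (intro sum.cong refl) (simp add: card_Kset)
    finally show ?thesis using cardE_sum by simp
  qed
  have norm: "(\<Sum>x\<in>?P. (\<psi> j x)\<^sup>2) = real (card E)" for j
  proof -
    have "(\<Sum>x\<in>?P. (\<psi> j x)\<^sup>2) = (\<Sum>x\<in>?P. if x \<in> E then 1 else 0)"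
      by (intro sum.cong refl) (auto simp: \<psi>_def)
    then show ?thesis using cardE_sum[of 1] by simp
  qed
  have lb: "K1 n k * real (card E) \<le> Qf n k (\<psi> j)" for j
    using quad_bound(1)[OF kn nk ke, of "\<psi> j"] norm by simp
  have n'K1: "real n' * K1 n k = real (n choose k) * (real n' - 2 * real k')"
  proof -
    have r: "real n' * real k = real n * real k'" using ratio by (metis of_nat_mult)
    have npos: "real n > 0" using kn by simp
    have "real n' * K1 n k = real (n choose k) * (real n' * real n - 2 * (real n' * real k)) / real n"
      unfolding K1_def by (simp add: algebra_simps)
    also have "\<dots> = real (n choose k) * (real n' - 2 * real k')"
      unfolding r using npos by (simp add: field_simps)
    finally show ?thesis .
  qed
  have zero_sum: "(\<Sum>j<n'. Qf n k (\<psi> j) - K1 n k * real (card E)) = 0"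
  proof -
    have a: "real n' * (K1 n k * real (card E)) = real (card E) * (real (n choose k) * (real n' - 2 * real k'))"
      by (subst mult.assoc[symmetric], subst n'K1, rule mult.commute)
    have "(\<Sum>j<n'. Qf n k (\<psi> j) - K1 n k * real (card E)) = (\<Sum>j<n'. Qf n k (\<psi> j)) - real n' * (K1 n k * real (card E))"
      by (simp add: sum_subtractf)
    then show ?thesis using a total by simp
  qed
  have eqj: "K1 n k * (\<Sum>x\<in>?P. (\<psi> j x)\<^sup>2) = Qf n k (\<psi> j)" if "j < n'" for j
  proof -
    have "\<forall>j\<in>{..<n'}. Qf n k (\<psi> j) - K1 n k * real (card E) = 0"
      using zero_sum lb by (subst sum_nonneg_eq_0_iff[symmetric]) (auto simp: algebra_simps)
    then show ?thesis using that norm by simp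
  qed
  have dic: "\<exists>i<n. \<forall>x\<in>E. \<forall>y\<in>E. ((j \<in> f x) = (j \<in> f y)) = ((i \<in> x) = (i \<in> y))" if "j < n'" for j
  proof -
    have pm: "\<forall>x\<in>?P. even (card x) \<longrightarrow> \<psi> j x = 1 \<or> \<psi> j x = -1" using Ealt by (auto simp: \<psi>_def)
    have zero: "\<forall>x\<in>?P. odd (card x) \<longrightarrow> \<psi> j x = 0" using Ealt by (auto simp: \<psi>_def)
    have hz: "\<forall>a\<in>?P. card a \<noteq> 1 \<longrightarrow> card a \<noteq> n - 1 \<longrightarrow> hat n (\<psi> j) a = 0"
      using quad_bound(2)[OF kn nk ke eqj[OF that]] by blast
    obtain i s where i: "i < n" "s = 1 \<or> s = -1" "\<forall>x\<in>?P. even (card x) \<longrightarrow> \<psi> j x = s * chi {i} x"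
      using dictator[OF n5 pm zero hz] by blast
    have "((j \<in> f x) = (j \<in> f y)) = ((i \<in> x) = (i \<in> y))" if "x \<in> E" "y \<in> E" for x y
    proof -
      have "\<psi> j x = s * chi {i} x" "\<psi> j y = s * chi {i} y" using i(3) that Ealt by auto
      moreover have "\<psi> j x = (if j \<in> f x then -1 else 1)" "\<psi> j y = (if j \<in> f y then -1 else 1)"
        using that by (auto simp: \<psi>_def)
      ultimately show ?thesis using i(2) by (auto simp: chi_single split: if_splits)
    qed
    then show ?thesis using i(1) by blast
  qed
  have "\<forall>j. \<exists>i. j < n' \<longrightarrow> i < n \<and> (\<forall>x\<in>E. \<forall>y\<in>E. ((j \<in> f x) = (j \<in> f y)) = ((i \<in> x) = (i \<in> y)))"
    using dic by blast
  then obtain idx where idx: "\<And>j. j < n' \<Longrightarrow> idx j < n \<and> (\<forall>x\<in>E. \<forall>y\<in>E. ((j \<in> f x) = (j \<in> f y)) = ((idx j \<in> x) = (idx j \<in> y)))"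
    by metis
  define m where "m i = card {j\<in>{..<n'}. idx j = i}" for i
  have sdf: "sd (f x) (f y) = {j\<in>{..<n'}. idx j \<in> sd x y}" if "x \<in> E" "y \<in> E" for x y
  proof -
    have "j \<in> sd (f x) (f y) \<longleftrightarrow> j \<in> {j\<in>{..<n'}. idx j \<in> sd x y}" for j
    proof (cases "j < n'")
      case True
      then show ?thesis using idx[OF True] that unfolding sd_def by auto
    next
      case False
      then show ?thesis using fsub that unfolding sd_def by auto
    qed
    then show ?thesis by blast
  qed
  have cardf: "card (sd (f x) (f y)) = (\<Sum>i\<in>sd x y. m i)" if "x \<in> E" "y \<in> E" for x y
  proof -
    have "finite (sd x y)" using that Ealt sd_subset[of x "{..<n}" y] finite_subset by blast
    then show ?thesis unfolding sdf[OF that] m_def by (intro card_fibers) auto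
  qed
  have emptyE: "{} \<in> E" using Ealt by simp
  have sum_k: "(\<Sum>i\<in>D. m i) = k'" if "D \<subseteq> {..<n}" "card D = k" for D
  proof -
    have DE: "D \<in> E" using that ke Ealt by auto
    have "sd {} D = D" by (simp add: sd_def)
    then show ?thesis using cardf[OF emptyE DE] adjf[OF emptyE DE] that by simp
  qed
  have mconst: "m i = m i'" if "i < n" "i' < n" "i \<noteq> i'" for i i'
  proof -
    have "card ({..<n} - {i, i'}) = n - 2" using that by (simp add: card_Diff_subset)
    hence "k - 1 \<le> card ({..<n} - {i, i'})" using kn by simp
    then obtain T where T: "T \<subseteq> {..<n} - {i, i'}" "card T = k - 1" "finite T"
      by (rule obtain_subset_with_card_n)
    have k1: "k \<ge> 1" using n5 nk by simp
    have ni: "i \<notin> T" "i' \<notin> T" using T(1) by auto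
    have "card (insert i T) = k" "card (insert i' T) = k" using T k1 ni by auto
    moreover have "insert i T \<subseteq> {..<n}" "insert i' T \<subseteq> {..<n}" using T that by auto
    ultimately have "(\<Sum>l\<in>insert i T. m l) = k'" "(\<Sum>l\<in>insert i' T. m l) = k'" using sum_k by auto
    moreover have "(\<Sum>l\<in>insert i T. m l) = m i + (\<Sum>l\<in>T. m l)" "(\<Sum>l\<in>insert i' T. m l) = m i' + (\<Sum>l\<in>T. m l)"
      using T ni by auto
    ultimately show ?thesis by simp
  qed
  define t where "t = m 0"
  have mt: "m i = t" if "i < n" for i
    using mconst[of i 0] that kn unfolding t_def by (cases "i = 0") auto
  have n't: "n' = n * t"
  proof -
    have "card {j\<in>{..<n'}. idx j \<in> {..<n}} = (\<Sum>i<n. m i)"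
      unfolding m_def by (rule card_fibers) auto
    moreover have "{j\<in>{..<n'}. idx j \<in> {..<n}} = {..<n'}" using idx by auto
    moreover have "(\<Sum>i<n. m i) = n * t" using mt by simp
    ultimately show ?thesis by simp
  qed
  have k't: "k' = k * t"
  proof -
    have "(\<Sum>i<k. m i) = k'" using sum_k[of "{..<k}"] kn by simp
    moreover have "(\<Sum>i<k. m i) = k * t" using mt kn by simp
    ultimately show ?thesis by simp
  qed
  have tpos: "t > 0" using k't k'pos by simp
  have cardt: "card (sd (f x) (f y)) = t * card (sd x y)" if "x \<in> E" "y \<in> E" for x y
  proof -
    have "sd x y \<subseteq> {..<n}" using that Ealt sd_subset by blast
    hence "(\<Sum>i\<in>sd x y. m i) = (\<Sum>i\<in>sd x y. t)" using mt by (intro sum.cong) auto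
    then show ?thesis using cardf[OF that] by simp
  qed
  have emb: "H_induced_embedding n k n' k' f"
    unfolding H_induced_embedding_def
  proof (intro conjI)
    show "f \<in> H_verts n \<rightarrow> H_verts n'" using hom unfolding H_hom_def by blast
    show "inj_on f (H_verts n)"
    proof (rule inj_onI)
      fix x y assume xy: "x \<in> H_verts n" "y \<in> H_verts n" "f x = f y"
      hence "card (sd (f x) (f y)) = 0" by (simp add: sd_def)
      hence "card (sd x y) = 0" using cardt[of x y] xy tpos unfolding E_def by simp
      moreover have "finite (sd x y)" using xy sd_subset[of x "{..<n}" y] finite_subset
        unfolding H_verts_def by blast
      ultimately show "x = y" by (simp add: sd_empty_iff)
    qed
    show "\<forall>S\<in>H_verts n. \<forall>T\<in>H_verts n. H_adj k' (f S) (f T) = H_adj k S T"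
      using cardt tpos k't unfolding adj_sd E_def by auto
  qed
  show ?thesis using n't k't emb by blast
qed


theorem theorem5p5:
  fixes n k n' k' :: nat
  assumes "k < n" and "n < 2 * k - 1"
    and "real n / real k = real n' / real k'"
    and "even k" and "even k'"
  shows "((\<exists>f. H_hom n k n' k' f) \<longleftrightarrow> (n dvd n' \<and> k dvd k'))
    \<and> (\<forall>f. H_hom n k n' k' f \<longrightarrow> H_induced_embedding n k n' k' f)"
proof -
  have kn: "k < n" using assms(1) .
  have nk: "n + 2 \<le> 2 * k" using assms(2) by simp
  have ke: "even k" using assms(4) .
  have kpos: "0 < k" using kn nk by simp
  have npos: "0 < n" using kn by simp
  have q: "real n / real k > 0" using kpos npos by simp
  have k'pos: "0 < k'"
  proof (rule ccontr)
    assume "\<not> 0 < k'"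
    hence "k' = 0" by simp
    then show False using q assms(3) by simp
  qed
  have ratio: "n * k' = n' * k"
  proof -
    have "real n * real k' = real n' * real k"
      using assms(3) kpos k'pos by (simp add: field_simps)
    then show ?thesis by (metis of_nat_eq_iff of_nat_mult)
  qed
  have dir1: "n dvd n' \<and> k dvd k'" if "H_hom n k n' k' f" for f
    using hom_struct[OF kn nk ke ratio k'pos that] by auto
  have dir2: "\<exists>f. H_hom n k n' k' f" if dv: "n dvd n'" "k dvd k'"
  proof -
    obtain t where t: "n' = n * t" using dv(1) by blast
    have "n * k' = n * (k * t)" using ratio t by (simp add: ac_simps)
    hence "k' = k * t" using npos by simp
    then show ?thesis using rep_hom[OF npos t] by blast
  qed
  have emb: "H_induced_embedding n k n' k' f" if "H_hom n k n' k' f" for f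
    using hom_struct[OF kn nk ke ratio k'pos that] by auto
  show ?thesis using dir1 dir2 emb by blast
qed

end
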